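(* Let $\nu,T>0$, $W(x_1,x_2,x_3):=(\sin x_2,\sin x_3,\sin x_1)$ and $\psi(x):=e^{-\frac{|x|^2}{8\nu T}}$ on $\mathbb{R}^3$. Then $(0,0,0)$ is a hyperbolic zero of the vector field $\mathop{\mathrm{curl}}\mathop{\mathrm{curl}}(\psi W)$.
   Context: A zero $x_0$ of a $C^1$ vector field $v$ is hyperbolic if $v(x_0)=0$, $\nabla v(x_0)$ is invertible and has no eigenvalue with zero real part. *)

theory Defs
  imports "HOL-Analysis.Analysis"
begin

definition pdiff :: "(real^3 \<Rightarrow> real) \<Rightarrow> 3 \<Rightarrow> real^3 \<Rightarrow> real" where
  "pdiff g i x = vector_derivative (\<lambda>t. g (x + t *\<^sub>R axis i 1)) (at 0)"

definition curl :: "(real^3 \<Rightarrow> real^3) \<Rightarrow> real^3 \<Rightarrow> real^3" where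
  "curl F x = vector
     [pdiff (\<lambda>y. F y $ 3) 2 x - pdiff (\<lambda>y. F y $ 2) 3 x,
      pdiff (\<lambda>y. F y $ 1) 3 x - pdiff (\<lambda>y. F y $ 3) 1 x,
      pdiff (\<lambda>y. F y $ 2) 1 x - pdiff (\<lambda>y. F y $ 1) 2 x]"

definition C1_field :: "(real^'n \<Rightarrow> real^'n) \<Rightarrow> bool" where
  "C1_field v \<longleftrightarrow> (\<exists>v'. (\<forall>x. (v has_derivative blinfun_apply (v' x)) (at x)) \<and> continuous_on UNIV v')"

definition complex_eigenvalue :: "real^'n^'n \<Rightarrow> complex \<Rightarrow> bool" where
  "complex_eigenvalue A l \<longleftrightarrow>
     (\<exists>z::complex^'n. z \<noteq> 0 \<and> (\<chi> i. \<Sum>j\<in>UNIV. complex_of_real (A $ i $ j) * z $ j) = (\<chi> i. l * z $ i))"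

definition hyperbolic_zero :: "(real^'n \<Rightarrow> real^'n) \<Rightarrow> real^'n \<Rightarrow> bool" where
  "hyperbolic_zero v x0 \<longleftrightarrow>
     C1_field v \<and> v x0 = 0 \<and>
     invertible (matrix (frechet_derivative v (at x0))) \<and>
     (\<forall>l. complex_eigenvalue (matrix (frechet_derivative v (at x0))) l \<longrightarrow> Re l \<noteq> 0)"

end

theory Submission
  imports Defs
begin
lemma pdiff_eqI:
  assumes "(g has_derivative g') (at x)"
  shows "pdiff g i x = g' (axis i 1)"
proof -
  have l: "linear g'" using assms has_derivative_linear by blast
  have "((\<lambda>t. x + t *\<^sub>R axis i 1) has_derivative (\<lambda>t. t *\<^sub>R axis i 1)) (at (0::real))"
    by (auto intro!: derivative_eq_intros)
  moreover have "(g has_derivative g') (at (x + (0::real) *\<^sub>R axis i 1))" using assms by simp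
  ultimately have "((\<lambda>t. g (x + t *\<^sub>R axis i 1)) has_derivative (\<lambda>t. g' (t *\<^sub>R axis i 1))) (at 0)"
    by (rule has_derivative_compose)
  moreover have "(\<lambda>t. g' (t *\<^sub>R axis i 1)) = (\<lambda>t. t *\<^sub>R g' (axis i 1))"
    using l by (simp add: linear_scale)
  ultimately have "((\<lambda>t. g (x + t *\<^sub>R axis i 1)) has_vector_derivative g' (axis i 1)) (at 0)"
    by (simp add: has_vector_derivative_def)
  then show ?thesis unfolding pdiff_def by (rule vector_derivative_at)
qed

lemma sum_axis: "(\<Sum>j\<in>UNIV. (axis i (1::real)) $ j * D j) = (D i :: real)"
proof -
  have "(\<Sum>j\<in>UNIV. (axis i (1::real)) $ j * D j) = (\<Sum>j\<in>UNIV. if j = i then D j else 0)"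
    by (rule sum.cong) (auto simp: axis_def)
  also have "\<dots> = D i" by simp
  finally show ?thesis .
qed

lemma pdiff_sumI:
  assumes "(g has_derivative (\<lambda>h. \<Sum>j\<in>UNIV. h $ j * D j)) (at x)"
  shows "pdiff g i x = D i"
  using pdiff_eqI[OF assms] sum_axis by simp

lemma t1: "(1::3) \<noteq> 2" "(1::3) \<noteq> 3" "(2::3) \<noteq> 3" by simp_all

inductive sm :: "(real^3 \<Rightarrow> real) \<Rightarrow> bool" where
  sm_const: "sm (\<lambda>x. k)"
| sm_coord: "sm (\<lambda>x. x $ i)"
| sm_add: "sm f \<Longrightarrow> sm g \<Longrightarrow> sm (\<lambda>x. f x + g x)"
| sm_mult: "sm f \<Longrightarrow> sm g \<Longrightarrow> sm (\<lambda>x. f x * g x)"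
| sm_sin: "sm f \<Longrightarrow> sm (\<lambda>x. sin (f x))"
| sm_cos: "sm f \<Longrightarrow> sm (\<lambda>x. cos (f x))"
| sm_exp: "sm f \<Longrightarrow> sm (\<lambda>x. exp (f x))"

lemma sm_deriv:
  "sm f \<Longrightarrow> \<exists>D. (\<forall>j. sm (D j)) \<and> (\<forall>x. (f has_derivative (\<lambda>h. \<Sum>j\<in>UNIV. h $ j * D j x)) (at x))"
proof (induction rule: sm.induct)
  case (sm_const k)
  show ?case
    by (rule exI[of _ "\<lambda>j x. 0"]) (auto intro: sm.sm_const)
next
  case (sm_coord i)
  have e: "(\<lambda>h::real^3. \<Sum>j\<in>UNIV. h $ j * (if j = i then 1 else 0)) = (\<lambda>h. h $ i)"
  proof
    fix h :: "real^3"
    have "(\<Sum>j\<in>UNIV. h $ j * (if j = i then 1 else 0)) = (\<Sum>j\<in>UNIV. if j = i then h $ j else 0)"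
      by (rule sum.cong) auto
    then show "(\<Sum>j\<in>UNIV. h $ j * (if j = i then 1 else 0)) = h $ i" by simp
  qed
  show ?case
    apply (rule exI[of _ "\<lambda>j x. if j = i then 1 else 0"])
    apply (auto intro: sm.sm_const bounded_linear_imp_has_derivative simp: e)
    done
next
  case (sm_add f g)
  then obtain Df Dg where f: "\<forall>j. sm (Df j)" "\<forall>x. (f has_derivative (\<lambda>h. \<Sum>j\<in>UNIV. h $ j * Df j x)) (at x)"
    and g: "\<forall>j. sm (Dg j)" "\<forall>x. (g has_derivative (\<lambda>h. \<Sum>j\<in>UNIV. h $ j * Dg j x)) (at x)" by blast
  show ?case
  proof (rule exI[of _ "\<lambda>j x. Df j x + Dg j x"], intro conjI allI)
    fix j show "sm (\<lambda>x. Df j x + Dg j x)" using f g by (intro sm.sm_add) auto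
  next
    fix x
    show "((\<lambda>x. f x + g x) has_derivative (\<lambda>h. \<Sum>j\<in>UNIV. h $ j * (Df j x + Dg j x))) (at x)"
      using has_derivative_add[OF f(2)[rule_format, of x] g(2)[rule_format, of x]]
      by (simp add: distrib_left sum.distrib)
  qed
next
  case (sm_mult f g)
  then obtain Df Dg where f: "\<forall>j. sm (Df j)" "\<forall>x. (f has_derivative (\<lambda>h. \<Sum>j\<in>UNIV. h $ j * Df j x)) (at x)"
    and g: "\<forall>j. sm (Dg j)" "\<forall>x. (g has_derivative (\<lambda>h. \<Sum>j\<in>UNIV. h $ j * Dg j x)) (at x)" by blast
  show ?case
  proof (rule exI[of _ "\<lambda>j x. f x * Dg j x + Df j x * g x"], intro conjI allI)
    fix j show "sm (\<lambda>x. f x * Dg j x + Df j x * g x)" using f g sm_mult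
      by (intro sm.sm_add sm.sm_mult) auto
  next
    fix x
    show "((\<lambda>x. f x * g x) has_derivative (\<lambda>h. \<Sum>j\<in>UNIV. h $ j * (f x * Dg j x + Df j x * g x))) (at x)"
      using has_derivative_mult[OF f(2)[rule_format, of x] g(2)[rule_format, of x]]
      by (simp add: distrib_left sum.distrib sum_distrib_left sum_distrib_right algebra_simps)
  qed
next
  case (sm_sin f)
  then obtain Df where f: "\<forall>j. sm (Df j)" "\<forall>x. (f has_derivative (\<lambda>h. \<Sum>j\<in>UNIV. h $ j * Df j x)) (at x)" by blast
  show ?case
  proof (rule exI[of _ "\<lambda>j x. cos (f x) * Df j x"], intro conjI allI)
    fix j show "sm (\<lambda>x. cos (f x) * Df j x)" using f sm_sin
      by (intro sm.sm_cos sm.sm_mult) auto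
  next
    fix x
    show "((\<lambda>x. sin (f x)) has_derivative (\<lambda>h. \<Sum>j\<in>UNIV. h $ j * (cos (f x) * Df j x))) (at x)"
      using has_derivative_sin[OF f(2)[rule_format, of x]]
      by (simp add: sum_distrib_left algebra_simps)
  qed
next
  case (sm_cos f)
  then obtain Df where f: "\<forall>j. sm (Df j)" "\<forall>x. (f has_derivative (\<lambda>h. \<Sum>j\<in>UNIV. h $ j * Df j x)) (at x)" by blast
  show ?case
  proof (rule exI[of _ "\<lambda>j x. (- sin (f x)) * Df j x"], intro conjI allI)
    fix j show "sm (\<lambda>x. (- sin (f x)) * Df j x)" using f sm_cos
      sm.sm_mult[OF sm.sm_const[of "-1"] sm.sm_sin[of f]]
      by (intro sm.sm_mult) auto
  next
    fix x
    show "((\<lambda>x. cos (f x)) has_derivative (\<lambda>h. \<Sum>j\<in>UNIV. h $ j * ((- sin (f x)) * Df j x))) (at x)"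
      using has_derivative_cos[OF f(2)[rule_format, of x]]
      by (simp add: sum_distrib_left algebra_simps)
  qed
next
  case (sm_exp f)
  then obtain Df where f: "\<forall>j. sm (Df j)" "\<forall>x. (f has_derivative (\<lambda>h. \<Sum>j\<in>UNIV. h $ j * Df j x)) (at x)" by blast
  show ?case
  proof (rule exI[of _ "\<lambda>j x. exp (f x) * Df j x"], intro conjI allI)
    fix j show "sm (\<lambda>x. exp (f x) * Df j x)" using f sm_exp
      by (intro sm.sm_exp sm.sm_mult) auto
  next
    fix x
    show "((\<lambda>x. exp (f x)) has_derivative (\<lambda>h. \<Sum>j\<in>UNIV. h $ j * (exp (f x) * Df j x))) (at x)"
      using has_derivative_exp[OF f(2)[rule_format, of x]]
      by (simp add: sum_distrib_left algebra_simps)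
  qed
qed

lemma sm_pdiff:
  assumes "sm f"
  shows "(f has_derivative (\<lambda>h. \<Sum>j\<in>UNIV. h $ j * pdiff f j x)) (at x)" "sm (pdiff f i)"
proof -
  obtain D where D: "\<forall>j. sm (D j)" "\<forall>x. (f has_derivative (\<lambda>h. \<Sum>j\<in>UNIV. h $ j * D j x)) (at x)"
    using sm_deriv[OF assms] by blast
  have e: "pdiff f j = D j" for j
    by (rule ext, rule pdiff_sumI, use D in blast)
  show "(f has_derivative (\<lambda>h. \<Sum>j\<in>UNIV. h $ j * pdiff f j x)) (at x)" "sm (pdiff f i)"
    using D by (simp_all add: e)
qed

lemma sm_deriv_at: "sm f \<Longrightarrow> (f has_derivative (\<lambda>h. \<Sum>j\<in>UNIV. h $ j * pdiff f j x)) (at x)"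
  by (rule sm_pdiff(1))

lemma sm_cont: "sm f \<Longrightarrow> continuous_on UNIV f"
  using sm_deriv_at has_derivative_continuous continuous_at_imp_continuous_on by blast

lemma sm_uminus: "sm f \<Longrightarrow> sm (\<lambda>x. - f x)"
  using sm_mult[OF sm_const[of "-1"], of f] by simp

lemma sm_minus: "sm f \<Longrightarrow> sm g \<Longrightarrow> sm (\<lambda>x. f x - g x)"
  using sm_add[OF _ sm_uminus, of f g] by simp

lemma sm_divide: "sm f \<Longrightarrow> sm (\<lambda>x. f x / k)"
  using sm_mult[OF _ sm_const[of "inverse k"], of f] by (simp add: divide_inverse)

lemma sm_power: "sm f \<Longrightarrow> sm (\<lambda>x. f x ^ n)"
proof (induction n)
  case 0 then show ?case using sm_const[of 1] by simp
next
  case (Suc n) then show ?case using sm_mult[of f "\<lambda>x. f x ^ n"] by simp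
qed

lemmas sm_simps[simp] = sm_const sm_coord sm_add sm_mult sm_sin sm_cos sm_exp sm_uminus sm_minus
  sm_divide sm_power sm_pdiff(2)

lemma sm_ev: "sm f \<Longrightarrow> (\<lambda>h. \<Sum>j\<in>UNIV. h $ j * pdiff f j x) (axis i 1) = pdiff f i x"
  by (simp add: sum_axis)

lemma pdiff_const[simp]: "pdiff (\<lambda>x. k) i x = 0"
  using pdiff_eqI[OF has_derivative_const] by simp

lemma pdiff_coord[simp]: "pdiff (\<lambda>x. x $ j) i x = (if j = i then 1 else 0)"
  by (rule trans[OF pdiff_eqI[OF bounded_linear_imp_has_derivative[OF bounded_linear_vec_nth]]])
    (simp add: axis_def)

lemma pdiff_add[simp]: "sm f \<Longrightarrow> sm g \<Longrightarrow> pdiff (\<lambda>x. f x + g x) i x = pdiff f i x + pdiff g i x"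
  by (rule trans[OF pdiff_eqI[OF has_derivative_add[OF sm_deriv_at sm_deriv_at]]]) (auto simp: sum_axis)

lemma pdiff_mult[simp]: "sm f \<Longrightarrow> sm g \<Longrightarrow> pdiff (\<lambda>x. f x * g x) i x = f x * pdiff g i x + pdiff f i x * g x"
  by (rule trans[OF pdiff_eqI[OF has_derivative_mult[OF sm_deriv_at sm_deriv_at]]]) (auto simp: sum_axis)

lemma pdiff_sin[simp]: "sm f \<Longrightarrow> pdiff (\<lambda>x. sin (f x)) i x = cos (f x) * pdiff f i x"
  by (rule trans[OF pdiff_eqI[OF has_derivative_sin[OF sm_deriv_at]]]) (auto simp: sum_axis)

lemma pdiff_cos[simp]: "sm f \<Longrightarrow> pdiff (\<lambda>x. cos (f x)) i x = - sin (f x) * pdiff f i x"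
  by (rule trans[OF pdiff_eqI[OF has_derivative_cos[OF sm_deriv_at]]]) (auto simp: sum_axis)

lemma pdiff_exp[simp]: "sm f \<Longrightarrow> pdiff (\<lambda>x. exp (f x)) i x = exp (f x) * pdiff f i x"
  by (rule trans[OF pdiff_eqI[OF has_derivative_exp[OF sm_deriv_at]]]) (auto simp: sum_axis)

lemma pdiff_uminus[simp]: "sm f \<Longrightarrow> pdiff (\<lambda>x. - f x) i x = - pdiff f i x"
  by (rule trans[OF pdiff_eqI[OF has_derivative_minus[OF sm_deriv_at]]]) (auto simp: sum_axis)

lemma pdiff_minus[simp]: "sm f \<Longrightarrow> sm g \<Longrightarrow> pdiff (\<lambda>x. f x - g x) i x = pdiff f i x - pdiff g i x"
  by (rule trans[OF pdiff_eqI[OF has_derivative_diff[OF sm_deriv_at sm_deriv_at]]]) (auto simp: sum_axis)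

lemma pdiff_divide[simp]: "sm f \<Longrightarrow> pdiff (\<lambda>x. f x / k) i x = pdiff f i x / k"
proof -
  assume "sm f"
  have "((\<lambda>x. f x / k) has_derivative (\<lambda>h. (\<Sum>j\<in>UNIV. h $ j * pdiff f j x) / k)) (at x)"
    using has_derivative_mult[OF sm_deriv_at[OF \<open>sm f\<close>] has_derivative_const[of "inverse k"]]
    by (simp add: divide_inverse)
  from pdiff_eqI[OF this] show ?thesis by (simp add: sum_axis)
qed

lemma pdiff_power[simp]: "sm f \<Longrightarrow> pdiff (\<lambda>x. f x ^ n) i x = of_nat n * f x ^ (n - 1) * pdiff f i x"
  by (rule trans[OF pdiff_eqI[OF has_derivative_power[OF sm_deriv_at]]]) (auto simp: sum_axis)

lemma vec_as_sum: "(\<chi> k. a k) = (\<Sum>k\<in>UNIV. a k *\<^sub>R axis k (1::real))"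
  by (simp add: vec_eq_iff sum_component axis_def if_distrib cong: if_cong)

lemma sm_field_deriv:
  assumes "\<forall>k. sm (gg k)"
  shows "((\<lambda>x. \<chi> k. gg k x) has_derivative (\<lambda>h. \<chi> k. \<Sum>j\<in>UNIV. h $ j * pdiff (gg k) j x)) (at x)"
proof -
  have "((\<lambda>x. \<Sum>k\<in>UNIV. gg k x *\<^sub>R axis k (1::real)) has_derivative
        (\<lambda>h. \<Sum>k\<in>UNIV. (\<Sum>j\<in>UNIV. h $ j * pdiff (gg k) j x) *\<^sub>R axis k 1)) (at x)"
    using assms by (intro has_derivative_sum has_derivative_scaleR_left sm_deriv_at) auto
  then show ?thesis by (simp add: vec_as_sum)
qed

definition Bl :: "3 \<Rightarrow> 3 \<Rightarrow> (real^3) \<Rightarrow>\<^sub>L (real^3)" where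
  "Bl k j = Blinfun (\<lambda>h. (h $ j) *\<^sub>R axis k 1)"

lemma Bl_apply: "blinfun_apply (Bl k j) h = (h $ j) *\<^sub>R axis k 1"
  unfolding Bl_def
  by (subst bounded_linear_Blinfun_apply) (auto intro: bounded_linear_intros)

lemma sm_field_C1:
  assumes "\<forall>k. sm (gg k)"
  shows "C1_field (\<lambda>x. \<chi> k. gg k x)"
  unfolding C1_field_def
proof (intro exI conjI allI)
  let ?v = "\<lambda>x. \<Sum>k\<in>UNIV. \<Sum>j\<in>UNIV. pdiff (gg k) j x *\<^sub>R Bl k j"
  fix x
  have "blinfun_apply (?v x) = (\<lambda>h. \<chi> k. \<Sum>j\<in>UNIV. h $ j * pdiff (gg k) j x)"
    by (auto simp: blinfun.sum_left blinfun.scaleR_left Bl_apply vec_as_sum[where a="\<lambda>k. \<Sum>j\<in>UNIV. _ k j"]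
        scaleR_sum_left sum_distrib_right intro!: ext sum.cong)
  then show "((\<lambda>x. \<chi> k. gg k x) has_derivative blinfun_apply (?v x)) (at x)"
    using sm_field_deriv[OF assms] by simp
next
  show "continuous_on UNIV (\<lambda>x. \<Sum>k\<in>UNIV. \<Sum>j\<in>UNIV. pdiff (gg k) j x *\<^sub>R Bl k j)"
    using assms by (intro continuous_intros sm_cont sm_pdiff(2)) auto
qed

lemma normsq: "(norm (x::real^3))\<^sup>2 = x$1 ^ 2 + x$2 ^ 2 + x$3 ^ 2"
  unfolding power2_norm_eq_inner inner_vec_def sum_3 by (simp add: power2_eq_square)

lemma sm_curl: "\<forall>k. sm (\<lambda>x. F x $ k) \<Longrightarrow> \<forall>k. sm (\<lambda>x. curl F x $ k)"
  unfolding curl_def forall_3 by simp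

definition circ :: "real \<Rightarrow> real \<Rightarrow> real^3^3" where
  "circ a b = vector [vector [0, a, b], vector [b, 0, a], vector [a, b, 0]]"

lemma circ_inv: "a^3 + b^3 \<noteq> 0 \<Longrightarrow> invertible (circ a b)"
  by (simp add: invertible_det_nz det_3 circ_def algebra_simps power3_eq_cube)

lemma circ_eig:
  assumes "a^3 + b^3 \<noteq> 0" "complex_eigenvalue (circ a b) l"
  shows "Re l \<noteq> 0"
proof
  assume re: "Re l = 0"
  obtain z :: "complex^3" where z: "z \<noteq> 0"
    and e: "(\<chi> i. \<Sum>j\<in>UNIV. complex_of_real (circ a b $ i $ j) * z $ j) = (\<chi> i. l * z $ i)"
    using assms(2) unfolding complex_eigenvalue_def by blast
  let ?a = "complex_of_real a" and ?b = "complex_of_real b"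
  have E1: "?a * z$2 + ?b * z$3 = l * z$1" and E2: "?b * z$1 + ?a * z$3 = l * z$2"
    and E3: "?a * z$1 + ?b * z$2 = l * z$3"
    using e by (simp_all add: vec_eq_iff forall_3 sum_3 circ_def)
  have F1: "l*z$1 - ?a*z$2 - ?b*z$3 = 0" by (simp add: E1[symmetric] algebra_simps)
  have F2: "l*z$2 - ?b*z$1 - ?a*z$3 = 0" by (simp add: E2[symmetric] algebra_simps)
  have F3: "l*z$3 - ?a*z$1 - ?b*z$2 = 0" by (simp add: E3[symmetric] algebra_simps)
  let ?p = "l^3 - 3*?a*?b*l - (?a^3 + ?b^3)"
  have "?p * z$1 = (l^2-?a*?b)*(l*z$1 - ?a*z$2 - ?b*z$3) + (?a*l+?b^2)*(l*z$2 - ?b*z$1 - ?a*z$3)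
      + (?a^2+?b*l)*(l*z$3 - ?a*z$1 - ?b*z$2)" by algebra
  then have p1: "?p * z$1 = 0" by (simp only: F1 F2 F3) simp
  have "?p * z$2 = (l^2-?a*?b)*(l*z$2 - ?b*z$1 - ?a*z$3) + (?a*l+?b^2)*(l*z$3 - ?a*z$1 - ?b*z$2)
      + (?a^2+?b*l)*(l*z$1 - ?a*z$2 - ?b*z$3)" by algebra
  then have p2: "?p * z$2 = 0" by (simp only: F1 F2 F3) simp
  have "?p * z$3 = (l^2-?a*?b)*(l*z$3 - ?a*z$1 - ?b*z$2) + (?a*l+?b^2)*(l*z$1 - ?a*z$2 - ?b*z$3)
      + (?a^2+?b*l)*(l*z$2 - ?b*z$1 - ?a*z$3)" by algebra
  then have p3: "?p * z$3 = 0" by (simp only: F1 F2 F3) simp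
  have "z$1 \<noteq> 0 \<or> z$2 \<noteq> 0 \<or> z$3 \<noteq> 0" using z by (auto simp: vec_eq_iff forall_3)
  then have p: "?p = 0" using p1 p2 p3 by auto
  obtain y where l: "l = Complex 0 y" using re by (metis complex.exhaust_sel)
  have "Re ?p = - (a^3 + b^3)" unfolding l by (simp add: power3_eq_cube)
  then show False using p assms(1) by simp
qed

theorem proposition4p6:
  fixes \<nu> T :: real
  assumes "\<nu> > 0" and "T > 0"
  shows "hyperbolic_zero
           (curl (curl (\<lambda>x::real^3. exp (- (norm x)\<^sup>2 / (8 * \<nu> * T)) *\<^sub>R
                                      vector [sin (x $ 2), sin (x $ 3), sin (x $ 1)])))
           0"
proof -
  define F :: "real^3 \<Rightarrow> real^3" where "F = (\<lambda>x::real^3. exp (- (norm x)\<^sup>2 / (8 * \<nu> * T)) *\<^sub>R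
                                      vector [sin (x $ 2), sin (x $ 3), sin (x $ 1)])"
  define G where "G = curl (curl F)"
  have smF: "\<forall>k. sm (\<lambda>x. F x $ k)" unfolding forall_3 F_def normsq by simp
  have smG: "\<forall>k. sm (\<lambda>x. G x $ k)" unfolding G_def by (intro sm_curl smF)
  have eta: "G = (\<lambda>x. \<chi> k. G x $ k)" by simp
  have C1: "C1_field G" using sm_field_C1[OF smG] eta by simp
  define L where "L = (\<lambda>h::real^3. \<chi> k. \<Sum>j\<in>UNIV. h $ j * pdiff (\<lambda>x. G x $ k) j 0)"
  have "(G has_derivative L) (at 0)" using sm_field_deriv[OF smG, of 0] eta L_def by simp
  then have fd: "frechet_derivative G (at 0) = L" by (metis frechet_derivative_at)
  have mat: "matrix L = (\<chi> i j. pdiff (\<lambda>x. G x $ i) j 0)"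
    unfolding matrix_def L_def by (simp add: sum_axis)
  have G0: "G 0 = 0"
    unfolding G_def F_def curl_def normsq by (simp add: vec_eq_iff forall_3)
  have M: "(\<chi> i j. pdiff (\<lambda>x. G x $ i) j 0) = circ (1 + 1 / (\<nu> * T)) (- 1 / (4 * \<nu> * T))"
    unfolding G_def F_def curl_def normsq circ_def
    by (simp add: vec_eq_iff forall_3)
  define a where "a = 1 + 1 / (\<nu> * T)"
  define b where "b = - 1 / (4 * \<nu> * T)"
  have nt: "\<nu> * T > 0" using assms by simp
  have nb: "0 \<le> - b" using nt unfolding b_def by (simp add: field_simps)
  have ba: "- b < a" using nt assms unfolding a_def b_def by (simp add: field_simps mult_pos_pos add_pos_pos)
  have "(- b)^3 < a^3" by (rule power_strict_mono[OF ba nb]) simp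
  then have ab: "a^3 + b^3 \<noteq> 0" by simp
  have J: "matrix (frechet_derivative G (at 0)) = circ a b"
    using fd mat M a_def b_def by simp
  show ?thesis
    unfolding F_def[symmetric] G_def[symmetric] hyperbolic_zero_def J
    using C1 G0 circ_inv[OF ab] circ_eig[OF ab] by blast
qed

end
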